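(* Let $m\ge 2$ be even and $n$ a multiple of $m/2$. If $S\subseteq\{0,1\}^n$ is a set of mutually incomparable solutions with respect to $m$-LOTZ, then $|S|\le(2n/m+1)^{m-1}$.
   Context: $m$-LOTZ: $\{0,1\}^n\to\mathbb N_0^m$ is defined by splitting $x$ into $m/2$ consecutive blocks of length $2n/m$; for block $k\in[m/2]$ (bits $x_{(k-1)2n/m+1},\dots,x_{k\cdot 2n/m}$), $f_{2k-1}(x)$ is the number of leading ones of the block (length of its longest all-ones prefix) and $f_{2k}(x)$ is the number of trailing zeros of the block (length of its longest all-zeros suffix). All objectives are maximized. $x\succeq y$ iff $f_j(x)\ge f_j(y)$ for all $j$; $x,y$ are incomparable if neither $x\succeq y$ nor $y\succeq x$; $S$ is a set of mutually incomparable solutions if any two distinct elements of $S$ are incomparable. *)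

theory Defs
  imports Main
begin

text \<open>Bit strings of length n are represented as bool lists of length n
  (True = 1). Blocks and objectives are 0-indexed: block k (k < m div 2)
  consists of positions k*b ..< (k+1)*b with b = 2n/m; objective j < m is
  the leading-ones count of block (j div 2) if j is even (paper: f_{2k-1})
  and the trailing-zeros count of block (j div 2) if j is odd (paper: f_{2k}).\<close>

definition blk_len :: "nat \<Rightarrow> nat \<Rightarrow> nat" where
  "blk_len m n = 2 * n div m"

definition block :: "nat \<Rightarrow> nat \<Rightarrow> bool list \<Rightarrow> nat \<Rightarrow> bool list" where
  "block m n x k = take (blk_len m n) (drop (k * blk_len m n) x)"

definition leading_ones :: "bool list \<Rightarrow> nat" where
  "leading_ones xs = length (takeWhile id xs)"

definition trailing_zeros :: "bool list \<Rightarrow> nat" where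
  "trailing_zeros xs = length (takeWhile Not (rev xs))"

definition mLOTZ :: "nat \<Rightarrow> nat \<Rightarrow> bool list \<Rightarrow> nat \<Rightarrow> nat" where
  "mLOTZ m n x j =
     (if even j then leading_ones (block m n x (j div 2))
      else trailing_zeros (block m n x (j div 2)))"

definition weakly_dominates :: "nat \<Rightarrow> nat \<Rightarrow> bool list \<Rightarrow> bool list \<Rightarrow> bool" where
  "weakly_dominates m n x y = (\<forall>j<m. mLOTZ m n x j \<ge> mLOTZ m n y j)"

definition incomparable :: "nat \<Rightarrow> nat \<Rightarrow> bool list \<Rightarrow> bool list \<Rightarrow> bool" where
  "incomparable m n x y = (\<not> weakly_dominates m n x y \<and> \<not> weakly_dominates m n y x)"

definition mutually_incomparable :: "nat \<Rightarrow> nat \<Rightarrow> bool list set \<Rightarrow> bool" where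
  "mutually_incomparable m n S = (\<forall>x\<in>S. \<forall>y\<in>S. x \<noteq> y \<longrightarrow> incomparable m n x y)"

end

theory Submission
  imports Defs
begin

lemma mLOTZ_le: "mLOTZ m n x j \<le> 2 * n div m"
proof -
  have "length (block m n x k) \<le> 2 * n div m" for k
    by (simp add: block_def blk_len_def)
  moreover have "leading_ones xs \<le> length xs" for xs
    unfolding leading_ones_def by (metis length_takeWhile_le)
  moreover have "trailing_zeros xs \<le> length xs" for xs
    unfolding trailing_zeros_def by (metis length_takeWhile_le length_rev)
  ultimately show ?thesis unfolding mLOTZ_def
    by (cases "even j") (auto intro: le_trans)
qed

theorem lemma5:
  fixes m n :: nat and S :: "bool list set"
  assumes "even m" and "m \<ge> 2" and "(m div 2) dvd n"
    and "S \<subseteq> {x. length x = n}"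
    and "mutually_incomparable m n S"
  shows "card S \<le> (2 * n div m + 1) ^ (m - 1)"
proof -
  define g where "g x = map (mLOTZ m n x) [0..<m-1]" for x
  define T where "T = {xs. set xs \<subseteq> {0..2 * n div m} \<and> length xs = m - 1}"
  have inj: "inj_on g S"
  proof
    fix x y assume xy: "x \<in> S" "y \<in> S" "g x = g y"
    show "x = y"
    proof (rule ccontr)
      assume "x \<noteq> y"
      with xy assms(5) have inc: "incomparable m n x y"
        unfolding mutually_incomparable_def by blast
      have eq: "mLOTZ m n x j = mLOTZ m n y j" if "j < m - 1" for j
      proof -
        have "g x ! j = g y ! j" using xy by simp
        thus ?thesis using that by (simp add: g_def)
      qed
      have "weakly_dominates m n x y \<or> weakly_dominates m n y x"
      proof (cases "mLOTZ m n x (m-1) \<ge> mLOTZ m n y (m-1)")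
        case True
        have "weakly_dominates m n x y" unfolding weakly_dominates_def
        proof (intro allI impI)
          fix j assume "j < m"
          then consider "j < m - 1" | "j = m - 1" by linarith
          thus "mLOTZ m n x j \<ge> mLOTZ m n y j" using eq True by cases auto
        qed
        thus ?thesis by blast
      next
        case False
        have "weakly_dominates m n y x" unfolding weakly_dominates_def
        proof (intro allI impI)
          fix j assume "j < m"
          then consider "j < m - 1" | "j = m - 1" by linarith
          thus "mLOTZ m n y j \<ge> mLOTZ m n x j" using eq False by cases auto
        qed
        thus ?thesis by blast
      qed
      with inc show False unfolding incomparable_def by blast
    qed
  qed
  have sub: "g ` S \<subseteq> T"
    unfolding T_def g_def using mLOTZ_le by auto
  have fin: "finite T" unfolding T_def
    by (rule finite_lists_length_eq) simp
  have "card S = card (g ` S)" using inj by (simp add: card_image)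
  also have "\<dots> \<le> card T" by (rule card_mono[OF fin sub])
  also have "card T = (2 * n div m + 1) ^ (m - 1)"
    unfolding T_def by (subst card_lists_length_eq) auto
  finally show ?thesis .
qed

end
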